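(* Let $n,d,k\in\mathbb{N}$ with $d\ge16k\ge32$, and set $\beta=1+\frac12\log\big(\frac{d}{16k}\big)$. Let $P^1,\dots,P^d$ be independent draws from $\mathsf{Beta}(\beta,\beta)$ and let $X\in(\{0,1\}^d)^n$ have entries $X_i^j$ independent conditioned on $P$ with $\mathbb{E}[X_i^j\mid P]=P^j$. Let $M:(\{0,1\}^d)^n\to\{0,1\}^d$ be $(1,1/(8nd))$-differentially private. Suppose that for every $j\in[d]$, conditioned on $P$ (probabilities over $X$ and the randomness of $M$): (1) if $P^j\le\frac78-\frac3{16}$ then $\Pr[M(X)^j=1]\le\frac{k}{16d}$; (2) if $P^j\ge\frac78$ then $\Pr[M(X)^j=1]\ge1-\frac1{16}$. Then $n\ge\frac1{16}\sqrt{k}\,\log\big(\frac{d}{16k}\big)$.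
   Context: A dataset $x\in(\{0,1\}^d)^n$ is an $n\times d$ matrix with rows $x_i$; two datasets are neighbors if they differ in at most one row. A randomized algorithm $M$ is $(\varepsilon,\delta)$-differentially private if for all neighboring $x,x'$ and all sets $R$ of outputs, $\Pr[M(x)\in R]\le e^\varepsilon\Pr[M(x')\in R]+\delta$. $\mathsf{Beta}(\alpha,\beta)$ has density proportional to $p^{\alpha-1}(1-p)^{\beta-1}$ on $[0,1]$. $\log$ is the natural logarithm. *)

theory Defs
  imports "HOL-Probability.Probability"
begin

definition datasets :: "nat \<Rightarrow> nat \<Rightarrow> bool list list set" where
  "datasets n d = {x. length x = n \<and> (\<forall>r\<in>set x. length r = d)}"

definition neighbors :: "bool list list \<Rightarrow> bool list list \<Rightarrow> bool" where
  "neighbors x x' \<longleftrightarrow> length x = length x' \<and> card {i. i < length x \<and> x ! i \<noteq> x' ! i} \<le> 1"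

definition diff_private ::
  "nat \<Rightarrow> nat \<Rightarrow> real \<Rightarrow> real \<Rightarrow> (bool list list \<Rightarrow> 'b pmf) \<Rightarrow> bool" where
  "diff_private n d \<epsilon> \<delta> M \<longleftrightarrow>
     (\<forall>x\<in>datasets n d. \<forall>x'\<in>datasets n d. neighbors x x' \<longrightarrow>
        (\<forall>R. measure_pmf.prob (M x) R \<le> exp \<epsilon> * measure_pmf.prob (M x') R + \<delta>))"

definition beta_density :: "real \<Rightarrow> real \<Rightarrow> real \<Rightarrow> real" where
  "beta_density a b p =
     (if 0 < p \<and> p < 1 then p powr (a - 1) * (1 - p) powr (b - 1) / Beta a b else 0)"

definition beta_measure :: "real \<Rightarrow> real \<Rightarrow> real measure" where
  "beta_measure a b = density lborel (\<lambda>p. ennreal (beta_density a b p))"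

text \<open>Law of P = (P^1,...,P^d), coordinates iid Beta(a,b) (coordinates indexed 0..d-1).\<close>
definition beta_prior :: "nat \<Rightarrow> real \<Rightarrow> (nat \<Rightarrow> real) measure" where
  "beta_prior d a = PiM {..<d} (\<lambda>_. beta_measure a a)"

definition data_weight :: "nat \<Rightarrow> nat \<Rightarrow> (nat \<Rightarrow> real) \<Rightarrow> bool list list \<Rightarrow> real" where
  "data_weight n d p x = (\<Prod>i<n. \<Prod>j<d. if x ! i ! j then p j else 1 - p j)"

definition cond_prob_one ::
  "nat \<Rightarrow> nat \<Rightarrow> (bool list list \<Rightarrow> bool list pmf) \<Rightarrow> (nat \<Rightarrow> real) \<Rightarrow> nat \<Rightarrow> real" where
  "cond_prob_one n d M p j =
     (\<Sum>x\<in>datasets n d. data_weight n d p x * measure_pmf.prob (M x) {y. y ! j})"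

end

theory Submission
  imports Defs
begin

lemma sum_prod_lists:
  fixes F :: "nat \<Rightarrow> 'a \<Rightarrow> real"
  assumes "finite A"
  shows "(\<Sum>xs\<in>{xs. set xs \<subseteq> A \<and> length xs = m}. \<Prod>i<m. F i (xs!i)) = (\<Prod>i<m. \<Sum>a\<in>A. F i a)"
  using assms
proof (induction m arbitrary: F)
  case 0
  have "{xs. set xs \<subseteq> A \<and> length xs = 0} = {[]}" by auto
  then show ?case by simp
next
  case (Suc m)
  have eq: "{xs. set xs \<subseteq> A \<and> length xs = Suc m} = (\<lambda>(a,xs). a#xs) ` (A \<times> {xs. set xs \<subseteq> A \<and> length xs = m})"
    by (auto simp: length_Suc_conv image_iff)
  have inj: "inj_on (\<lambda>(a,xs). a#xs) (A \<times> {xs. set xs \<subseteq> A \<and> length xs = m})"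
    by (auto simp: inj_on_def)
  have "(\<Sum>xs\<in>{xs. set xs \<subseteq> A \<and> length xs = Suc m}. \<Prod>i<Suc m. F i (xs!i))
      = (\<Sum>(a,xs)\<in>A \<times> {xs. set xs \<subseteq> A \<and> length xs = m}. \<Prod>i<Suc m. F i ((a#xs)!i))"
    unfolding eq by (subst sum.reindex[OF inj]) (simp add: case_prod_unfold)
  also have "\<dots> = (\<Sum>a\<in>A. \<Sum>xs\<in>{xs. set xs \<subseteq> A \<and> length xs = m}. F 0 a * (\<Prod>i<m. F (Suc i) (xs!i)))"
    by (subst sum.cartesian_product[symmetric]) (simp only: prod.lessThan_Suc_shift nth_Cons_0 nth_Cons_Suc)
  also have "\<dots> = (\<Sum>a\<in>A. F 0 a * (\<Prod>i<m. \<Sum>a\<in>A. F (Suc i) a))"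
    using Suc.IH[OF Suc.prems, of "\<lambda>i. F (Suc i)"] by (simp add: sum_distrib_left[symmetric])
  also have "\<dots> = (\<Prod>i<Suc m. \<Sum>a\<in>A. F i a)"
    by (simp only: prod.lessThan_Suc_shift sum_distrib_right)
  finally show ?case .
qed

definition wt :: "(nat \<Rightarrow> real) \<Rightarrow> nat \<Rightarrow> bool \<Rightarrow> real" where
  "wt p j b = (if b then p j else 1 - p j)"
definition rows :: "nat \<Rightarrow> bool list set" where
  "rows d = {r. length r = d}"
definition wr :: "(nat \<Rightarrow> real) \<Rightarrow> nat \<Rightarrow> bool list \<Rightarrow> real" where
  "wr p d r = (\<Prod>j<d. wt p j (r!j))"

lemma rows_alt: "rows d = {xs. set xs \<subseteq> UNIV \<and> length xs = d}"
  by (auto simp: rows_def)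
lemma finite_rows: "finite (rows d)"
  unfolding rows_alt by (rule finite_lists_length_eq) simp
lemma datasets_alt: "datasets n d = {xs. set xs \<subseteq> rows d \<and> length xs = n}"
  by (auto simp: datasets_def rows_def)
lemma finite_datasets: "finite (datasets n d)"
  unfolding datasets_alt by (rule finite_lists_length_eq) (simp add: finite_rows)
lemma data_weight_wr: "data_weight n d p x = (\<Prod>i<n. wr p d (x!i))"
  by (simp add: data_weight_def wr_def wt_def)

lemma rowE:
  "(\<Sum>r\<in>rows d. wr p d r * (\<Prod>l<d. h l (r!l))) = (\<Prod>l<d. p l * h l True + (1 - p l) * h l False)"
proof -
  have "(\<Sum>r\<in>rows d. wr p d r * (\<Prod>l<d. h l (r!l))) = (\<Sum>r\<in>rows d. \<Prod>l<d. wt p l (r!l) * h l (r!l))"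
    by (simp add: wr_def prod.distrib)
  also have "\<dots> = (\<Prod>l<d. \<Sum>b\<in>UNIV. wt p l b * h l b)"
    unfolding rows_alt by (rule sum_prod_lists) simp
  also have "\<dots> = (\<Prod>l<d. p l * h l True + (1 - p l) * h l False)"
    by (simp add: UNIV_bool wt_def add.commute)
  finally show ?thesis .
qed

lemma sum_wr: "(\<Sum>r\<in>rows d. wr p d r) = 1"
  using rowE[where d=d and p=p and h="\<lambda>_ _. 1"] by simp

lemma sum_dw: "(\<Sum>x\<in>datasets n d. data_weight n d p x) = 1"
proof -
  have "(\<Sum>x\<in>datasets n d. data_weight n d p x) = (\<Prod>i<n. \<Sum>r\<in>rows d. wr p d r)"
    unfolding data_weight_wr datasets_alt by (rule sum_prod_lists) (simp add: finite_rows)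
  then show ?thesis by (simp add: sum_wr)
qed

lemma Ecov:
  assumes "j < d" "j' < d"
  shows "(\<Sum>r\<in>rows d. wr p d r * ((of_bool (r!j) - p j) * (of_bool (r!j') - p j')))
     = (if j = j' then p j * (1 - p j) else 0)"
proof -
  define h where "h l b = (if l = j then of_bool b - p j else 1) * (if l = j' then of_bool b - p j' else (1::real))" for l b
  have "\<And>r. (\<Prod>l<d. h l (r!l)) = (of_bool (r!j) - p j) * (of_bool (r!j') - p j')"
    using assms by (simp add: h_def prod.distrib)
  then have "(\<Sum>r\<in>rows d. wr p d r * ((of_bool (r!j) - p j) * (of_bool (r!j') - p j')))
      = (\<Prod>l<d. p l * h l True + (1 - p l) * h l False)"
    using rowE[where d=d and p=p and h=h] by simp
  also have "\<dots> = (if j = j' then p j * (1 - p j) else 0)"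
  proof (cases "j = j'")
    case True
    have "(\<Prod>l<d. p l * h l True + (1 - p l) * h l False) = (\<Prod>l<d. if l = j then p j * (1 - p j) else 1)"
      by (rule prod.cong) (auto simp: h_def True algebra_simps power2_eq_square)
    then show ?thesis using assms True by simp
  next
    case False
    have "p j * h j True + (1 - p j) * h j False = 0"
      using False by (simp add: h_def algebra_simps)
    then have "(\<Prod>l<d. p l * h l True + (1 - p l) * h l False) = 0"
      using assms by (intro prod_zero) auto
    then show ?thesis using False by simp
  qed
  finally show ?thesis .
qed

lemma row_var:
  fixes u :: "nat \<Rightarrow> real"
  shows "(\<Sum>r\<in>rows d. wr p d r * (\<Sum>j<d. u j * (of_bool (r!j) - p j))^2) = (\<Sum>j<d. (u j)^2 * (p j * (1 - p j)))"
proof -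
  have "(\<Sum>r\<in>rows d. wr p d r * (\<Sum>j<d. u j * (of_bool (r!j) - p j))^2)
     = (\<Sum>r\<in>rows d. \<Sum>j<d. \<Sum>j'<d. u j * u j' * (wr p d r * ((of_bool (r!j) - p j) * (of_bool (r!j') - p j'))))"
    by (simp add: power2_eq_square sum_product sum_distrib_left algebra_simps)
  also have "\<dots> = (\<Sum>j<d. \<Sum>j'<d. u j * u j' * (\<Sum>r\<in>rows d. wr p d r * ((of_bool (r!j) - p j) * (of_bool (r!j') - p j'))))"
    by (simp add: sum.swap[of _ "rows d"] sum_distrib_left)
  also have "\<dots> = (\<Sum>j<d. \<Sum>j'<d. u j * u j' * (if j = j' then p j * (1 - p j) else 0))"
    by (intro sum.cong refl) (simp add: Ecov)
  also have "\<dots> = (\<Sum>j<d. (u j)^2 * (p j * (1 - p j)))"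
    by (simp add: power2_eq_square if_distrib cong: if_cong)
  finally show ?thesis .
qed

lemma dp_sum:
  fixes q1 q2 f :: "'a \<Rightarrow> real"
  assumes fin: "finite Y" and q2: "\<forall>y\<in>Y. 0 \<le> q2 y" and dp: "\<forall>R\<subseteq>Y. sum q1 R \<le> c * sum q2 R + \<delta>"
    and c: "0 \<le> c" and dl: "0 \<le> \<delta>" and f: "\<forall>y\<in>Y. 0 \<le> f y \<and> f y \<le> D" and D: "0 \<le> D"
  shows "(\<Sum>y\<in>Y. q1 y * f y) \<le> c * (\<Sum>y\<in>Y. q2 y * f y) + D * \<delta>"
  using f D
proof (induction "card (f ` Y - {0})" arbitrary: f D rule: less_induct)
  case (less f D)
  show ?case
  proof (cases "f ` Y - {0} = {}")
    case True
    then have "\<forall>y\<in>Y. f y = 0" by auto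
    then show ?thesis using less.prems dl by (simp add: mult_nonneg_nonneg)
  next
    case False
    define v where "v = Min (f ` Y - {0})"
    have finF: "finite (f ` Y - {0})" using fin by simp
    have vin: "v \<in> f ` Y - {0}" unfolding v_def using False finF by (rule Min_in[rotated])
    have vle: "\<And>y. y \<in> Y \<Longrightarrow> f y \<noteq> 0 \<Longrightarrow> v \<le> f y" unfolding v_def using finF by (intro Min_le) auto
    obtain y0 where y0: "y0 \<in> Y" "f y0 = v" "v \<noteq> 0" using vin by auto
    have vpos: "0 < v" using y0 less.prems by force
    have vD: "v \<le> D" using y0 less.prems by force
    define R where "R = {y\<in>Y. f y \<noteq> 0}"
    define g where "g y = f y - (if f y = 0 then 0 else v)" for y
    have g: "\<forall>y\<in>Y. 0 \<le> g y \<and> g y \<le> D - v"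
      using less.prems vle vD by (auto simp: g_def)
    have sub: "g ` Y - {0} \<subseteq> (\<lambda>u. u - v) ` (f ` Y - {0, v})"
    proof
      fix z assume "z \<in> g ` Y - {0}"
      then obtain y where y: "y \<in> Y" "z = g y" "g y \<noteq> 0" by auto
      then have "f y \<noteq> 0" "f y \<noteq> v" by (auto simp: g_def)
      then show "z \<in> (\<lambda>u. u - v) ` (f ` Y - {0, v})" using y by (auto simp: g_def)
    qed
    have "card (g ` Y - {0}) \<le> card ((\<lambda>u. u - v) ` (f ` Y - {0, v}))"
      by (rule card_mono[OF _ sub]) (use fin in simp)
    also have "\<dots> \<le> card (f ` Y - {0, v})" by (rule card_image_le) (use fin in simp)
    also have "\<dots> < card (f ` Y - {0})"
      by (rule psubset_card_mono[OF finF]) (use vin in auto)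
    finally have IH: "(\<Sum>y\<in>Y. q1 y * g y) \<le> c * (\<Sum>y\<in>Y. q2 y * g y) + (D - v) * \<delta>"
      using less.hyps[of g "D - v"] g vD by auto
    have split: "(\<Sum>y\<in>Y. q y * f y) = (\<Sum>y\<in>Y. q y * g y) + v * sum q R" for q :: "'a \<Rightarrow> real"
    proof -
      have "(\<Sum>y\<in>Y. q y * f y) = (\<Sum>y\<in>Y. q y * g y + v * (if y \<in> R then q y else 0))"
        by (intro sum.cong) (auto simp: g_def R_def algebra_simps)
      also have "\<dots> = (\<Sum>y\<in>Y. q y * g y) + v * sum q R"
        by (simp add: sum.distrib sum_distrib_left[symmetric] sum.If_cases[OF fin] R_def Int_absorb1)
          (simp add: Int_def conj_commute)
      finally show ?thesis .
    qed
    have RY: "R \<subseteq> Y" by (auto simp: R_def)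
    have "(\<Sum>y\<in>Y. q1 y * f y) = (\<Sum>y\<in>Y. q1 y * g y) + v * sum q1 R" by (rule split)
    also have "\<dots> \<le> c * (\<Sum>y\<in>Y. q2 y * g y) + (D - v) * \<delta> + v * (c * sum q2 R + \<delta>)"
      using IH dp RY vpos by (intro add_mono mult_left_mono) auto
    also have "\<dots> = c * (\<Sum>y\<in>Y. q2 y * f y) + D * \<delta>"
      unfolding split[of q2] by (simp add: algebra_simps)
    finally show ?thesis .
  qed
qed

lemma dw_update:
  assumes "i < length x"
  shows "data_weight (length x) d p (x[i:=r]) * wr p d (x!i) = data_weight (length x) d p x * wr p d r"
proof -
  have *: "(\<Prod>i'<length x. f i') = f i * (\<Prod>i'\<in>{..<length x}-{i}. f i')" for f :: "nat \<Rightarrow> real"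
    using assms by (subst prod.remove[of _ i]) auto
  have **: "(\<Prod>i'\<in>{..<length x}-{i}. wr p d (x[i:=r] ! i')) = (\<Prod>i'\<in>{..<length x}-{i}. wr p d (x ! i'))"
    by (intro prod.cong) auto
  show ?thesis unfolding data_weight_wr
    by (subst (1 2) *) (use assms ** in simp)
qed

lemma swap_sum:
  assumes "i < n"
  shows "(\<Sum>x\<in>datasets n d. \<Sum>r\<in>rows d. data_weight n d p x * wr p d r * \<Phi> (x[i:=r]) (x!i))
       = (\<Sum>x\<in>datasets n d. \<Sum>r\<in>rows d. data_weight n d p x * wr p d r * \<Phi> x r)"
proof -
  let ?S = "datasets n d \<times> rows d"
  define \<sigma> where "\<sigma> = (\<lambda>(x::bool list list, r::bool list). (x[i:=r], x!i))"
  have mem: "\<sigma> a \<in> ?S" if "a \<in> ?S" for a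
    using that assms by (auto simp: \<sigma>_def datasets_def rows_def set_update_subset_insert[THEN subsetD] dest!: set_update_subset_insert[THEN subsetD])
  have inv: "\<sigma> (\<sigma> a) = a" if "a \<in> ?S" for a
    using that assms by (auto simp: \<sigma>_def datasets_def)
  have "(\<Sum>x\<in>datasets n d. \<Sum>r\<in>rows d. data_weight n d p x * wr p d r * \<Phi> (x[i:=r]) (x!i))
      = (\<Sum>(x,r)\<in>?S. data_weight n d p x * wr p d r * \<Phi> (x[i:=r]) (x!i))"
    by (simp add: sum.cartesian_product)
  also have "\<dots> = (\<Sum>(x,r)\<in>?S. data_weight n d p x * wr p d r * \<Phi> x r)"
  proof (rule sum.reindex_bij_witness[where i=\<sigma> and j=\<sigma>])
    fix a assume a: "a \<in> ?S"
    obtain x r where xr: "a = (x, r)" by (cases a)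
    have lx: "length x = n" using a xr by (auto simp: datasets_def)
    show "(case \<sigma> a of (x, r) \<Rightarrow> data_weight n d p x * wr p d r * \<Phi> x r) =
          (case a of (x, r) \<Rightarrow> data_weight n d p x * wr p d r * \<Phi> (x[i := r]) (x ! i))"
      using dw_update[of i x d p r] assms lx by (simp add: \<sigma>_def xr)
  qed (auto intro: mem inv)
  also have "\<dots> = (\<Sum>x\<in>datasets n d. \<Sum>r\<in>rows d. data_weight n d p x * wr p d r * \<Phi> x r)"
    by (simp add: sum.cartesian_product)
  finally show ?thesis .
qed

definition Zs :: "(nat \<Rightarrow> real) \<Rightarrow> nat \<Rightarrow> bool list \<Rightarrow> bool list \<Rightarrow> real" where
  "Zs p d r y = (\<Sum>j<d. of_bool (y!j) * (of_bool (r!j) - p j))"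
definition Ns :: "nat \<Rightarrow> bool list \<Rightarrow> real" where
  "Ns d y = (\<Sum>j<d. of_bool (y!j))"

lemma wr_nonneg: "\<forall>j<d. 0 \<le> p j \<and> p j \<le> 1 \<Longrightarrow> 0 \<le> wr p d r"
  unfolding wr_def wt_def by (intro prod_nonneg) auto
lemma dw_nonneg: "\<forall>j<d. 0 \<le> p j \<and> p j \<le> 1 \<Longrightarrow> 0 \<le> data_weight n d p x"
  unfolding data_weight_wr by (intro prod_nonneg) (auto intro: wr_nonneg)

lemma Zs_le: "\<forall>j<d. 0 \<le> p j \<and> p j \<le> 1 \<Longrightarrow> Zs p d r y \<le> d"
proof -
  assume p: "\<forall>j<d. 0 \<le> p j \<and> p j \<le> 1"
  have "Zs p d r y \<le> (\<Sum>j<d. 1)" unfolding Zs_def by (intro sum_mono) (use p in auto)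
  then show ?thesis by simp
qed

lemma sqrt_trick: "(c::real) > 0 \<Longrightarrow> max 0 z \<le> (z^2 / c + c) / 2"
proof -
  assume c: "c > 0"
  have "0 \<le> (z - c)^2" by simp
  then have "2 * c * z \<le> z^2 + c^2" by (simp add: power2_eq_square algebra_simps)
  then have "z \<le> (z^2 / c + c) / 2" using c by (simp add: field_simps power2_eq_square)
  moreover have "0 \<le> (z^2 / c + c) / 2" using c by (simp add: add_nonneg_nonneg)
  ultimately show ?thesis by simp
qed

lemma prob_sum:
  assumes "set_pmf Q \<subseteq> rows d"
  shows "measure_pmf.prob Q R = (\<Sum>y\<in>rows d. pmf Q y * of_bool (y \<in> R))"
proof -
  have "measure_pmf.prob Q R = measure_pmf.prob Q ((R \<inter> rows d) \<inter> set_pmf Q)"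
    using measure_Int_set_pmf[of Q R] assms by (metis inf.absorb_iff2 inf_assoc inf_commute)
  also have "\<dots> = measure_pmf.prob Q (R \<inter> rows d)" by (rule measure_Int_set_pmf)
  also have "\<dots> = sum (pmf Q) (R \<inter> rows d)"
    by (rule measure_measure_pmf_finite) (simp add: finite_rows)
  also have "\<dots> = (\<Sum>y\<in>rows d. pmf Q y * of_bool (y \<in> R))"
  proof -
    have "R \<inter> rows d = {y\<in>rows d. y \<in> R}" by auto
    then show ?thesis by (auto simp add: sum.inter_filter[OF finite_rows] intro!: sum.cong)
  qed
  finally show ?thesis .
qed

lemma sum_pmf_rows:
  assumes "set_pmf Q \<subseteq> rows d"
  shows "(\<Sum>y\<in>rows d. pmf Q y) = 1"
  using prob_sum[OF assms, of UNIV] by simp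

lemma var_bound:
  assumes p: "\<forall>j<d. 0 \<le> p j \<and> p j \<le> 1"
  shows "(\<Sum>r\<in>rows d. wr p d r * (Zs p d r y)^2) \<le> Ns d y / 4"
proof -
  have "(\<Sum>r\<in>rows d. wr p d r * (Zs p d r y)^2) = (\<Sum>j<d. (of_bool (y!j))^2 * (p j * (1 - p j)))"
    unfolding Zs_def by (rule row_var)
  also have "\<dots> \<le> (\<Sum>j<d. of_bool (y!j) / 4)"
  proof (intro sum_mono)
    fix j assume "j \<in> {..<d}"
    have "p j * (1 - p j) = 1/4 - (p j - 1/2)^2" by (simp add: power2_eq_square algebra_simps)
    then have "p j * (1 - p j) \<le> 1/4" by simp
    then show "(of_bool (y!j))^2 * (p j * (1 - p j)) \<le> of_bool (y!j) / (4::real)" by auto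
  qed
  also have "\<dots> = Ns d y / 4" unfolding Ns_def by (rule sum_divide_distrib[symmetric])
  finally show ?thesis .
qed

lemma upper_i:
  fixes M :: "bool list list \<Rightarrow> bool list pmf"
  assumes p: "\<forall>j<d. 0 \<le> p j \<and> p j \<le> 1" and i: "i < n" and c: "c > 0" and dl: "0 \<le> \<delta>"
   and supp: "\<forall>x\<in>datasets n d. set_pmf (M x) \<subseteq> rows d"
   and dp: "\<forall>x\<in>datasets n d. \<forall>x'\<in>datasets n d. neighbors x x' \<longrightarrow>
              (\<forall>R. measure_pmf.prob (M x) R \<le> exp 1 * measure_pmf.prob (M x') R + \<delta>)"
  shows "(\<Sum>x\<in>datasets n d. data_weight n d p x * (\<Sum>y\<in>rows d. pmf (M x) y * Zs p d (x!i) y))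
     \<le> exp 1 * ((\<Sum>x\<in>datasets n d. data_weight n d p x * (\<Sum>y\<in>rows d. pmf (M x) y * Ns d y)) / 4 / c + c) / 2 + d * \<delta>"
proof -
  let ?D = "datasets n d" and ?Y = "rows d"
  let ?w = "data_weight n d p" and ?q = "\<lambda>x y. pmf (M x) y"
  define Zp where "Zp r y = max 0 (Zs p d r y)" for r y
  have w0: "\<And>x. 0 \<le> ?w x" using p by (rule dw_nonneg)
  have wr0: "\<And>r. 0 \<le> wr p d r" using p by (rule wr_nonneg)
  have Zp0: "\<And>r y. 0 \<le> Zp r y \<and> Zp r y \<le> d" using Zs_le[OF p] by (auto simp: Zp_def)
  have ww: "(\<Sum>x\<in>?D. \<Sum>r\<in>?Y. ?w x * wr p d r * K) = K" for K
    by (simp add: sum_distrib_left[symmetric] sum_distrib_right[symmetric] sum_wr sum_dw)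
  have s1: "(\<Sum>x\<in>?D. ?w x * (\<Sum>y\<in>?Y. ?q x y * Zs p d (x!i) y)) \<le> (\<Sum>x\<in>?D. ?w x * (\<Sum>y\<in>?Y. ?q x y * Zp (x!i) y))"
    by (intro sum_mono mult_left_mono w0) (auto simp: Zp_def)
  also have "\<dots> = (\<Sum>x\<in>?D. \<Sum>r\<in>?Y. ?w x * wr p d r * (\<Sum>y\<in>?Y. ?q x y * Zp (x!i) y))"
    by (simp add: sum_distrib_left[symmetric] sum_distrib_right[symmetric] sum_wr)
  also have "\<dots> \<le> (\<Sum>x\<in>?D. \<Sum>r\<in>?Y. ?w x * wr p d r * (exp 1 * (\<Sum>y\<in>?Y. ?q (x[i:=r]) y * Zp (x!i) y) + d * \<delta>))"
  proof (intro sum_mono mult_left_mono mult_nonneg_nonneg w0 wr0)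
    fix x r assume x: "x \<in> ?D" and r: "r \<in> ?Y"
    have lx: "length x = n" using x by (simp add: datasets_def)
    have x': "x[i:=r] \<in> ?D" using x r i
      by (auto simp: datasets_def rows_def dest!: set_update_subset_insert[THEN subsetD])
    have "{i'. i' < length x \<and> x ! i' \<noteq> x[i:=r] ! i'} \<subseteq> {i}" by (auto, metis nth_list_update_neq)
    then have "card {i'. i' < length x \<and> x ! i' \<noteq> x[i:=r] ! i'} \<le> 1"
      using card_mono[of "{i}"] by fastforce
    then have nb: "neighbors x (x[i:=r])" by (simp add: neighbors_def)
    have dpR: "\<forall>R\<subseteq>?Y. sum (?q x) R \<le> exp 1 * sum (?q (x[i:=r])) R + \<delta>"
    proof (intro allI impI)
      fix R assume R: "R \<subseteq> ?Y"
      then have fR: "finite R" using finite_rows finite_subset by blast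
      show "sum (?q x) R \<le> exp 1 * sum (?q (x[i:=r])) R + \<delta>"
        using dp x x' nb by (simp add: measure_measure_pmf_finite[OF fR, symmetric])
    qed
    show "(\<Sum>y\<in>?Y. ?q x y * Zp (x!i) y) \<le> exp 1 * (\<Sum>y\<in>?Y. ?q (x[i:=r]) y * Zp (x!i) y) + d * \<delta>"
      by (rule dp_sum[OF finite_rows _ dpR]) (use Zp0 dl in auto)
  qed
  also have "\<dots> = exp 1 * (\<Sum>x\<in>?D. \<Sum>r\<in>?Y. ?w x * wr p d r * (\<Sum>y\<in>?Y. ?q (x[i:=r]) y * Zp (x!i) y)) + (\<Sum>x\<in>?D. \<Sum>r\<in>?Y. ?w x * wr p d r * (d * \<delta>))"
  proof -
    have "\<And>x r. ?w x * wr p d r * (exp 1 * (\<Sum>y\<in>?Y. ?q (x[i:=r]) y * Zp (x!i) y) + d * \<delta>)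
       = exp 1 * (?w x * wr p d r * (\<Sum>y\<in>?Y. ?q (x[i:=r]) y * Zp (x!i) y)) + ?w x * wr p d r * (d * \<delta>)"
      by (simp only: distrib_left mult.left_commute[of "exp 1"])
    then show ?thesis by (simp only: sum.distrib sum_distrib_left)
  qed
  also have "\<dots> = exp 1 * (\<Sum>x\<in>?D. \<Sum>r\<in>?Y. ?w x * wr p d r * (\<Sum>y\<in>?Y. ?q (x[i:=r]) y * Zp (x!i) y)) + d * \<delta>"
    by (simp only: ww)
  also have "(\<Sum>x\<in>?D. \<Sum>r\<in>?Y. ?w x * wr p d r * (\<Sum>y\<in>?Y. ?q (x[i:=r]) y * Zp (x!i) y))
      = (\<Sum>x\<in>?D. \<Sum>r\<in>?Y. ?w x * wr p d r * (\<Sum>y\<in>?Y. ?q x y * Zp r y))"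
    using swap_sum[OF i, of d p "\<lambda>x' r'. \<Sum>y\<in>?Y. ?q x' y * Zp r' y"] by simp
  also have "\<dots> = (\<Sum>x\<in>?D. ?w x * (\<Sum>y\<in>?Y. ?q x y * (\<Sum>r\<in>?Y. wr p d r * Zp r y)))"
  proof (intro sum.cong refl)
    fix x
    have "(\<Sum>r\<in>?Y. ?w x * wr p d r * (\<Sum>y\<in>?Y. ?q x y * Zp r y))
        = ?w x * (\<Sum>r\<in>?Y. \<Sum>y\<in>?Y. ?q x y * (wr p d r * Zp r y))"
      by (simp add: sum_distrib_left mult.assoc mult.left_commute)
    also have "\<dots> = ?w x * (\<Sum>y\<in>?Y. \<Sum>r\<in>?Y. ?q x y * (wr p d r * Zp r y))"
      by (subst sum.swap) (rule refl)
    also have "\<dots> = ?w x * (\<Sum>y\<in>?Y. ?q x y * (\<Sum>r\<in>?Y. wr p d r * Zp r y))"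
      by (simp add: sum_distrib_left)
    finally show "(\<Sum>r\<in>?Y. ?w x * wr p d r * (\<Sum>y\<in>?Y. ?q x y * Zp r y))
        = ?w x * (\<Sum>y\<in>?Y. ?q x y * (\<Sum>r\<in>?Y. wr p d r * Zp r y))" .
  qed
  also have "\<dots> \<le> (\<Sum>x\<in>?D. ?w x * (\<Sum>y\<in>?Y. ?q x y * ((Ns d y / 4) / c + c) / 2))"
  proof (rule sum_mono, rule mult_left_mono[OF _ w0], rule sum_mono)
    fix x y
    have "(\<Sum>r\<in>?Y. wr p d r * Zp r y) \<le> (\<Sum>r\<in>?Y. wr p d r * (((Zs p d r y)^2 / c + c) / 2))"
      by (intro sum_mono mult_left_mono wr0) (unfold Zp_def, rule sqrt_trick[OF c])
    also have "\<dots> = ((\<Sum>r\<in>?Y. wr p d r * (Zs p d r y)^2) / c + c) / 2"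
    proof -
      have "\<And>r. wr p d r * (((Zs p d r y)^2 / c + c) / 2) = (wr p d r * (Zs p d r y)^2) / (c * 2) + c / 2 * wr p d r"
        using c by (simp add: field_simps)
      then have "(\<Sum>r\<in>?Y. wr p d r * (((Zs p d r y)^2 / c + c) / 2))
          = (\<Sum>r\<in>?Y. wr p d r * (Zs p d r y)^2) / (c * 2) + c / 2 * (\<Sum>r\<in>?Y. wr p d r)"
        by (simp only: sum.distrib sum_divide_distrib[symmetric] sum_distrib_left[symmetric])
      then show ?thesis using c by (simp add: sum_wr field_simps)
    qed
    also have "\<dots> \<le> ((Ns d y / 4) / c + c) / 2"
      using divide_right_mono[OF var_bound[OF p, of y], of c] c by (simp add: less_imp_le)
    finally show "?q x y * (\<Sum>r\<in>?Y. wr p d r * Zp r y) \<le> ?q x y * ((Ns d y / 4) / c + c) / 2"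
      by (metis mult_left_mono pmf_nonneg times_divide_eq_right)
  qed
  also have "\<dots> = ((\<Sum>x\<in>?D. ?w x * (\<Sum>y\<in>?Y. ?q x y * Ns d y)) / 4 / c + c) / 2"
  proof -
    have "\<And>x. x \<in> ?D \<Longrightarrow> (\<Sum>y\<in>?Y. ?q x y * ((Ns d y / 4) / c + c) / 2)
       = ((\<Sum>y\<in>?Y. ?q x y * Ns d y) / 4 / c + c) / 2"
    proof -
      fix x assume x: "x \<in> ?D"
      have s1: "(\<Sum>y\<in>?Y. ?q x y) = 1" using supp x sum_pmf_rows by blast
      have "(\<Sum>y\<in>?Y. ?q x y * ((Ns d y / 4) / c + c) / 2) = (\<Sum>y\<in>?Y. (?q x y * Ns d y) / (8 * c) + (c / 2) * ?q x y)"
        by (intro sum.cong refl) (use c in \<open>simp add: field_simps\<close>)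
      also have "\<dots> = (\<Sum>y\<in>?Y. ?q x y * Ns d y) / (8 * c) + (c / 2) * (\<Sum>y\<in>?Y. ?q x y)"
        by (simp only: sum.distrib sum_divide_distrib[symmetric] sum_distrib_left[symmetric])
      also have "\<dots> = ((\<Sum>y\<in>?Y. ?q x y * Ns d y) / 4 / c + c) / 2"
        using s1 c by (simp add: field_simps)
      finally show "(\<Sum>y\<in>?Y. ?q x y * ((Ns d y / 4) / c + c) / 2) = ((\<Sum>y\<in>?Y. ?q x y * Ns d y) / 4 / c + c) / 2" .
    qed
    then have "(\<Sum>x\<in>?D. ?w x * (\<Sum>y\<in>?Y. ?q x y * ((Ns d y / 4) / c + c) / 2))
       = (\<Sum>x\<in>?D. ?w x * (((\<Sum>y\<in>?Y. ?q x y * Ns d y) / 4 / c + c) / 2))"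
      by (intro sum.cong) auto
    also have "\<dots> = ((\<Sum>x\<in>?D. ?w x * (\<Sum>y\<in>?Y. ?q x y * Ns d y)) / 4 / c + c) / 2"
      using sum_dw[of n d p]
      by (simp add: algebra_simps add_divide_distrib sum.distrib sum_divide_distrib[symmetric] sum_distrib_left[symmetric] sum_distrib_right[symmetric])
    finally show ?thesis .
  qed
  finally show ?thesis by (simp add: mult_left_mono)
qed

lemma Beta_pos: "0 < a \<Longrightarrow> 0 < b \<Longrightarrow> 0 < Beta a (b::real)"
  by (simp add: Beta_def)

lemma beta_density_nonneg: "0 < a \<Longrightarrow> 0 \<le> beta_density a a t"
  by (auto simp: beta_density_def intro!: divide_nonneg_pos Beta_pos)

lemma beta_density_meas[measurable]: "beta_density a b \<in> borel_measurable borel"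
  unfolding beta_density_def by measurable

lemma moment_nonneg: "0 < \<beta> \<Longrightarrow> 0 \<le> beta_density \<beta> \<beta> t * (t^a * (1-t)^b)"
  by (cases "0 < t \<and> t < 1") (auto simp: beta_density_def intro!: mult_nonneg_nonneg divide_nonneg_pos Beta_pos)

lemma moment_eq:
  fixes a b :: nat and \<beta> :: real
  assumes "0 < \<beta>"
  shows "beta_density \<beta> \<beta> t * (t^a * (1-t)^b) =
    (if t \<in> {0<..<1} then t powr (real a + \<beta> - 1) * (1 - t) powr (real b + \<beta> - 1) / Beta \<beta> \<beta> else 0)"
proof (cases "0 < t \<and> t < 1")
  case True
  then have "t^a = t powr real a" "(1-t)^b = (1-t) powr real b" by (simp_all add: powr_realpow)
  then show ?thesis using True
    by (simp add: beta_density_def powr_add[symmetric] field_simps)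
next
  case False
  then show ?thesis by (auto simp: beta_density_def)
qed

lemma moment_has_integral:
  fixes a b :: nat and \<beta> :: real
  assumes "0 < \<beta>"
  shows "((\<lambda>t. beta_density \<beta> \<beta> t * (t^a * (1-t)^b)) has_integral
            (Beta (real a + \<beta>) (real b + \<beta>) / Beta \<beta> \<beta>)) UNIV"
proof -
  have "((\<lambda>t. t powr (real a + \<beta> - 1) * (1 - t) powr (real b + \<beta> - 1)) has_integral Beta (real a + \<beta>) (real b + \<beta>)) {0..1}"
    by (rule has_integral_Beta_real) (use assms in auto)
  then have "((\<lambda>t. t powr (real a + \<beta> - 1) * (1 - t) powr (real b + \<beta> - 1) / Beta \<beta> \<beta>) has_integral
       Beta (real a + \<beta>) (real b + \<beta>) / Beta \<beta> \<beta>) {0<..<1}"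
    by (subst (asm) has_integral_Icc_iff_Ioo) (rule has_integral_divide)
  then have "((\<lambda>t. if t \<in> {0<..<1} then t powr (real a + \<beta> - 1) * (1 - t) powr (real b + \<beta> - 1) / Beta \<beta> \<beta> else 0) has_integral
       Beta (real a + \<beta>) (real b + \<beta>) / Beta \<beta> \<beta>) UNIV"
    by (subst has_integral_restrict_UNIV)
  then show ?thesis unfolding moment_eq[OF assms] .
qed

lemma moment_nn:
  fixes a b :: nat and \<beta> :: real
  assumes "0 < \<beta>"
  shows "(\<integral>\<^sup>+t. ennreal (beta_density \<beta> \<beta> t * (t^a * (1-t)^b)) \<partial>lborel) =
            ennreal (Beta (real a + \<beta>) (real b + \<beta>) / Beta \<beta> \<beta>)"
proof (rule nn_integral_has_integral_lborel[OF _ _ moment_has_integral[OF assms]])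
  show "(\<lambda>t. beta_density \<beta> \<beta> t * (t ^ a * (1 - t) ^ b)) \<in> borel_measurable borel" by measurable
  fix t show "0 \<le> beta_density \<beta> \<beta> t * (t ^ a * (1 - t) ^ b)"
    using assms by (rule moment_nonneg)
qed

lemma prob_space_beta: "0 < \<beta> \<Longrightarrow> prob_space (beta_measure \<beta> \<beta>)"
  unfolding beta_measure_def
  apply (rule prob_spaceI)
  apply (subst emeasure_density)
  using moment_nn[of \<beta> 0 0] Beta_pos[of \<beta> \<beta>] by auto

lemma moment_integrable:
  fixes a b :: nat and \<beta> :: real
  assumes "0 < \<beta>"
  shows "integrable (beta_measure \<beta> \<beta>) (\<lambda>t. t^a * (1-t)^b)"
    and "integral\<^sup>L (beta_measure \<beta> \<beta>) (\<lambda>t. t^a * (1-t)^b) = Beta (real a + \<beta>) (real b + \<beta>) / Beta \<beta> \<beta>"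
proof -
  have nn: "\<And>t. 0 \<le> beta_density \<beta> \<beta> t * (t ^ a * (1 - t) ^ b)"
    using assms by (rule moment_nonneg)
  have i: "integrable lborel (\<lambda>t. beta_density \<beta> \<beta> t * (t ^ a * (1 - t) ^ b))"
    by (rule integrableI_nonneg) (use nn moment_nn[OF assms, of a b] in auto)
  show "integrable (beta_measure \<beta> \<beta>) (\<lambda>t. t^a * (1-t)^b)"
    unfolding beta_measure_def
    by (subst integrable_density) (use i beta_density_nonneg[OF assms] in auto)
  have "integral\<^sup>L (beta_measure \<beta> \<beta>) (\<lambda>t. t^a * (1-t)^b) = integral\<^sup>L lborel (\<lambda>t. beta_density \<beta> \<beta> t * (t ^ a * (1 - t) ^ b))"
    unfolding beta_measure_def
    by (subst integral_density) (use beta_density_nonneg[OF assms] in auto)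
  also have "\<dots> = Beta (real a + \<beta>) (real b + \<beta>) / Beta \<beta> \<beta>"
    by (subst integral_eq_nn_integral) (use nn moment_nn[OF assms, of a b] assms in \<open>auto simp: Beta_pos\<close>)
  finally show "integral\<^sup>L (beta_measure \<beta> \<beta>) (\<lambda>t. t^a * (1-t)^b) = Beta (real a + \<beta>) (real b + \<beta>) / Beta \<beta> \<beta>" .
qed

lemma AE_beta_01: "0 < \<beta> \<Longrightarrow> AE t in beta_measure \<beta> \<beta>. 0 < t \<and> t < 1"
  unfolding beta_measure_def
  by (subst AE_density) (auto simp: beta_density_def)

lemma quarter_bound: "(t::real) * (1 - t) \<le> 1/4"
proof -
  have "t * (1 - t) = 1/4 - (t - 1/2)^2" by (simp add: power2_eq_square algebra_simps)
  then show ?thesis by simp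
qed

lemma Beta_upper:
  fixes \<beta> :: real
  assumes "1 \<le> \<beta>"
  shows "Beta \<beta> \<beta> \<le> (1/4) powr (\<beta> - 1)"
proof -
  have h1: "((\<lambda>t. t powr (\<beta> - 1) * (1 - t) powr (\<beta> - 1)) has_integral Beta \<beta> \<beta>) {0..1}"
    by (rule has_integral_Beta_real) (use assms in auto)
  have h2: "((\<lambda>t::real. (1/4::real) powr (\<beta> - 1)) has_integral ((1/4) powr (\<beta> - 1))) {0..1}"
    using has_integral_const_real[of "(1/4::real) powr (\<beta> - 1)" 0 1] by simp
  have "Beta \<beta> \<beta> \<le> (1/4) powr (\<beta> - 1)"
  proof (rule has_integral_le[OF h1 h2])
    fix t :: real assume t: "t \<in> {0..1}"
    have "t powr (\<beta> - 1) * (1 - t) powr (\<beta> - 1) = (t * (1 - t)) powr (\<beta> - 1)" by (simp add: powr_mult)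
    also have "\<dots> \<le> (1/4) powr (\<beta> - 1)"
      by (rule powr_mono2) (use assms t quarter_bound[of t] in auto)
    finally show "t powr (\<beta> - 1) * (1 - t) powr (\<beta> - 1) \<le> (1/4) powr (\<beta> - 1)" .
  qed
  then show ?thesis by simp
qed

lemma tail_lower:
  fixes \<beta> :: real
  assumes "1 \<le> \<beta>"
  shows "1/16 * (15/64) powr (\<beta> - 1) \<le> measure (beta_measure \<beta> \<beta>) {7/8..}"
proof -
  let ?B = "Beta \<beta> \<beta>" and ?c = "(15/256::real) powr (\<beta> - 1) / Beta \<beta> \<beta>"
  have Bpos: "0 < ?B" using assms by (intro Beta_pos) auto
  interpret prob_space "beta_measure \<beta> \<beta>" using assms by (intro prob_space_beta) auto
  have pt: "ennreal ?c * indicator {7/8..15/16} t \<le> ennreal (beta_density \<beta> \<beta> t) * indicator {7/8..} t" for t :: real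
  proof (cases "t \<in> {7/8..15/16}")
    case True
    have tt: "15/256 \<le> t * (1 - t)"
    proof -
      have "t * (1 - t) - 15/256 = (15/16 - t) * (t - 1/16)" by (simp add: field_simps)
      moreover have "0 \<le> (15/16 - t) * (t - 1/16)" using True by (intro mult_nonneg_nonneg) auto
      ultimately show ?thesis by simp
    qed
    have "?c \<le> (t * (1 - t)) powr (\<beta> - 1) / ?B"
      by (intro divide_right_mono powr_mono2) (use assms tt Bpos in auto)
    also have "\<dots> = beta_density \<beta> \<beta> t" using True by (simp add: beta_density_def powr_mult)
    finally show ?thesis using True by (auto simp: indicator_def intro: ennreal_leI)
  qed (auto simp: indicator_def)
  have "ennreal ?c * ennreal (1/16) = (\<integral>\<^sup>+t. ennreal ?c * indicator {7/8..15/16::real} t \<partial>lborel)"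
    by (subst nn_integral_cmult_indicator) auto
  also have "\<dots> \<le> (\<integral>\<^sup>+t. ennreal (beta_density \<beta> \<beta> t) * indicator {7/8::real..} t \<partial>lborel)"
    by (intro nn_integral_mono pt)
  also have "\<dots> = emeasure (beta_measure \<beta> \<beta>) {7/8..}"
    unfolding beta_measure_def by (subst emeasure_density) auto
  also have "\<dots> = ennreal (measure (beta_measure \<beta> \<beta>) {7/8..})"
    by (rule emeasure_eq_measure)
  finally have "?c * (1/16) \<le> measure (beta_measure \<beta> \<beta>) {7/8..}"
    using Bpos by (subst (asm) ennreal_mult[symmetric]) (auto simp: ennreal_le_iff)
  moreover have "1/16 * (15/64) powr (\<beta> - 1) \<le> ?c * (1/16)"
  proof -
    have "(15/256::real) powr (\<beta> - 1) / (1/4) powr (\<beta> - 1) \<le> ?c"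
      by (intro divide_left_mono Beta_upper assms mult_pos_pos Bpos) auto
    moreover have "(15/256::real) powr (\<beta> - 1) / (1/4) powr (\<beta> - 1) = (15/64) powr (\<beta> - 1)"
      by (simp add: powr_divide[symmetric])
    ultimately show ?thesis by simp
  qed
  ultimately show ?thesis by linarith
qed

lemma prod_int:
  fixes F :: "nat \<Rightarrow> real \<Rightarrow> real"
  assumes b: "0 < \<beta>" and F: "\<And>j. j < d \<Longrightarrow> integrable (beta_measure \<beta> \<beta>) (F j)"
  shows "integrable (beta_prior d \<beta>) (\<lambda>p. \<Prod>j<d. F j (p j))"
    and "integral\<^sup>L (beta_prior d \<beta>) (\<lambda>p. \<Prod>j<d. F j (p j)) = (\<Prod>j<d. integral\<^sup>L (beta_measure \<beta> \<beta>) (F j))"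
proof -
  interpret P: prob_space "beta_measure \<beta> \<beta>" by (rule prob_space_beta[OF b])
  interpret product_sigma_finite "\<lambda>_::nat. beta_measure \<beta> \<beta>"
    by (simp add: product_sigma_finite_def P.sigma_finite_measure_axioms)
  show "integrable (beta_prior d \<beta>) (\<lambda>p. \<Prod>j<d. F j (p j))"
    unfolding beta_prior_def by (rule product_integrable_prod) (use F in auto)
  show "integral\<^sup>L (beta_prior d \<beta>) (\<lambda>p. \<Prod>j<d. F j (p j)) = (\<Prod>j<d. integral\<^sup>L (beta_measure \<beta> \<beta>) (F j))"
    unfolding beta_prior_def by (rule product_integral_prod) (use F in auto)
qed

lemma prob_space_prior: "0 < \<beta> \<Longrightarrow> prob_space (beta_prior d \<beta>)"
  unfolding beta_prior_def by (rule prob_space_PiM) (rule prob_space_beta)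

lemma AE_prior_01:
  assumes "0 < \<beta>"
  shows "AE p in beta_prior d \<beta>. \<forall>j<d. 0 < p j \<and> p j < 1"
proof -
  have "\<forall>j\<in>{..<d}. AE p in beta_prior d \<beta>. 0 < p j \<and> p j < 1"
    unfolding beta_prior_def
    by (intro ballI AE_PiM_component[where M="\<lambda>_. beta_measure \<beta> \<beta>" and P="\<lambda>t. 0 < t \<and> t < 1"]
        prob_space_beta AE_beta_01 assms) auto
  then have "AE p in beta_prior d \<beta>. \<forall>j\<in>{..<d}. 0 < p j \<and> p j < 1"
    by (rule eventually_ball_finite[rotated]) simp
  then show ?thesis by (rule eventually_mono) auto
qed

definition cnt :: "nat \<Rightarrow> bool list list \<Rightarrow> nat \<Rightarrow> nat" where
  "cnt n x j = card {i\<in>{..<n}. x!i!j}"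

lemma cnt_le: "cnt n x j \<le> n"
  unfolding cnt_def by (rule order_trans[OF card_mono[of "{..<n}"]]) auto

lemma dw_cols: "data_weight n d p x = (\<Prod>j<d. p j ^ cnt n x j * (1 - p j) ^ (n - cnt n x j))"
proof -
  have "data_weight n d p x = (\<Prod>j<d. \<Prod>i<n. if x ! i ! j then p j else 1 - p j)"
    unfolding data_weight_def by (rule prod.swap)
  also have "\<dots> = (\<Prod>j<d. p j ^ cnt n x j * (1 - p j) ^ (n - cnt n x j))"
  proof (intro prod.cong refl)
    fix j
    have c1: "card ({..<n} \<inter> - {i. x ! i ! j}) = n - cnt n x j"
    proof -
      have "{..<n} \<inter> - {i. x ! i ! j} = {..<n} - {i\<in>{..<n}. x!i!j}" by auto
      moreover have "card ({..<n} - {i\<in>{..<n}. x!i!j}) = n - card {i\<in>{..<n}. x!i!j}"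
        by (subst card_Diff_subset) auto
      ultimately show ?thesis unfolding cnt_def by simp
    qed
    have c2: "{..<n} \<inter> {i. x ! i ! j} = {i\<in>{..<n}. x!i!j}" by auto
    show "(\<Prod>i<n. if x ! i ! j then p j else 1 - p j) = p j ^ cnt n x j * (1 - p j) ^ (n - cnt n x j)"
      by (simp add: prod.If_cases c1 c2 cnt_def)
  qed
  finally show ?thesis .
qed

definition mom :: "real \<Rightarrow> nat \<Rightarrow> nat \<Rightarrow> real" where
  "mom \<beta> a b = Beta (real a + \<beta>) (real b + \<beta>) / Beta \<beta> \<beta>"

lemma E1:
  assumes b: "0 < \<beta>"
  shows "integrable (beta_prior d \<beta>) (\<lambda>p. data_weight n d p x)"
    and "integral\<^sup>L (beta_prior d \<beta>) (\<lambda>p. data_weight n d p x) = (\<Prod>j<d. mom \<beta> (cnt n x j) (n - cnt n x j))"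
  unfolding dw_cols
  using prod_int[OF b, of d "\<lambda>j t. t ^ cnt n x j * (1 - t) ^ (n - cnt n x j)"] moment_integrable[OF b]
  by (auto simp: mom_def)

lemma E2:
  assumes b: "0 < \<beta>" and j0: "j0 < d"
  shows "integrable (beta_prior d \<beta>) (\<lambda>p. data_weight n d p x * p j0)"
    and "integral\<^sup>L (beta_prior d \<beta>) (\<lambda>p. data_weight n d p x * p j0) =
           (\<Prod>j<d. mom \<beta> (cnt n x j + (if j = j0 then 1 else 0)) (n - cnt n x j))"
proof -
  have eq: "data_weight n d p x * p j0 = (\<Prod>j<d. p j ^ (cnt n x j + (if j = j0 then 1 else 0)) * (1 - p j) ^ (n - cnt n x j))" for p :: "nat \<Rightarrow> real"
  proof -
    have "data_weight n d p x * p j0 = (\<Prod>j<d. p j ^ cnt n x j * (1 - p j) ^ (n - cnt n x j)) * (\<Prod>j<d. if j = j0 then p j else 1)"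
      using j0 by (simp add: dw_cols)
    also have "\<dots> = (\<Prod>j<d. p j ^ (cnt n x j + (if j = j0 then 1 else 0)) * (1 - p j) ^ (n - cnt n x j))"
      by (subst prod.distrib[symmetric]) (intro prod.cong refl, auto simp: power_add)
    finally show ?thesis .
  qed
  show "integrable (beta_prior d \<beta>) (\<lambda>p. data_weight n d p x * p j0)"
    unfolding eq using prod_int(1)[OF b, of d "\<lambda>j t. t ^ (cnt n x j + (if j = j0 then 1 else 0)) * (1 - t) ^ (n - cnt n x j)"] moment_integrable[OF b]
    by auto
  show "integral\<^sup>L (beta_prior d \<beta>) (\<lambda>p. data_weight n d p x * p j0) =
           (\<Prod>j<d. mom \<beta> (cnt n x j + (if j = j0 then 1 else 0)) (n - cnt n x j))"
    unfolding eq using prod_int(2)[OF b, of d "\<lambda>j t. t ^ (cnt n x j + (if j = j0 then 1 else 0)) * (1 - t) ^ (n - cnt n x j)"] moment_integrable[OF b]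
    by (auto simp: mom_def)
qed

lemma mom_rec:
  assumes b: "0 < \<beta>"
  shows "(real a + real b + 2 * \<beta>) * mom \<beta> (a + 1) b = (real a + \<beta>) * mom \<beta> a b"
proof -
  have "real a + \<beta> \<notin> \<int>\<^sub>\<le>\<^sub>0" using b by (auto dest: nonpos_Ints_nonpos)
  from Beta_plus1_left[OF this, of "real b + \<beta>"]
  show ?thesis unfolding mom_def by (simp add: algebra_simps add_divide_distrib[symmetric] times_divide_eq_right)
qed

lemma fp_identity:
  assumes b: "0 < \<beta>" and j0: "j0 < d"
  shows "real (cnt n x j0) * integral\<^sup>L (beta_prior d \<beta>) (\<lambda>p. data_weight n d p x)
        - real n * integral\<^sup>L (beta_prior d \<beta>) (\<lambda>p. data_weight n d p x * p j0)
      = \<beta> * (2 * integral\<^sup>L (beta_prior d \<beta>) (\<lambda>p. data_weight n d p x * p j0) - integral\<^sup>L (beta_prior d \<beta>) (\<lambda>p. data_weight n d p x))"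
proof -
  define K where "K = (\<Prod>j\<in>{..<d}-{j0}. mom \<beta> (cnt n x j) (n - cnt n x j))"
  define a where "a = cnt n x j0"
  define bb where "bb = n - a"
  have nab: "real n = real a + real bb" using cnt_le[of n x j0] by (simp add: a_def bb_def)
  have e1: "integral\<^sup>L (beta_prior d \<beta>) (\<lambda>p. data_weight n d p x) = mom \<beta> a bb * K"
    unfolding E1(2)[OF b] K_def a_def bb_def using j0 by (subst prod.remove[of _ j0]) auto
  have "(\<Prod>j\<in>{..<d}-{j0}. mom \<beta> (cnt n x j + (if j = j0 then 1 else 0)) (n - cnt n x j)) = K"
    unfolding K_def by (intro prod.cong) auto
  then have e2: "integral\<^sup>L (beta_prior d \<beta>) (\<lambda>p. data_weight n d p x * p j0) = mom \<beta> (a+1) bb * K"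
    unfolding E2(2)[OF b j0] a_def bb_def using j0 by (subst prod.remove[of _ j0]) auto
  have r: "(real a + real bb + 2 * \<beta>) * mom \<beta> (a + 1) bb = (real a + \<beta>) * mom \<beta> a bb"
    by (rule mom_rec[OF b])
  show ?thesis unfolding e1 e2 a_def[symmetric] nab
    using arg_cong[OF r, of "\<lambda>z. z * K"] by (simp add: algebra_simps)
qed

lemma lin_int:
  fixes c1 c2 :: "nat \<Rightarrow> bool list list \<Rightarrow> real"
  assumes b: "0 < \<beta>"
  shows "integrable (beta_prior d \<beta>) (\<lambda>p. \<Sum>j<d. \<Sum>x\<in>datasets n d. c1 j x * data_weight n d p x + c2 j x * (data_weight n d p x * p j))"
    and "integral\<^sup>L (beta_prior d \<beta>) (\<lambda>p. \<Sum>j<d. \<Sum>x\<in>datasets n d. c1 j x * data_weight n d p x + c2 j x * (data_weight n d p x * p j))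
      = (\<Sum>j<d. \<Sum>x\<in>datasets n d. c1 j x * integral\<^sup>L (beta_prior d \<beta>) (\<lambda>p. data_weight n d p x)
            + c2 j x * integral\<^sup>L (beta_prior d \<beta>) (\<lambda>p. data_weight n d p x * p j))"
proof -
  have i1: "\<And>x. integrable (beta_prior d \<beta>) (\<lambda>p. data_weight n d p x)" by (rule E1(1)[OF b])
  have i2: "\<And>x j. j < d \<Longrightarrow> integrable (beta_prior d \<beta>) (\<lambda>p. data_weight n d p x * p j)" by (rule E2(1)[OF b])
  have i3: "\<And>j x. j < d \<Longrightarrow> integrable (beta_prior d \<beta>) (\<lambda>p. c1 j x * data_weight n d p x + c2 j x * (data_weight n d p x * p j))"
    by (intro Bochner_Integration.integrable_add Bochner_Integration.integrable_mult_right i1 i2)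
  have i4: "\<And>j. j < d \<Longrightarrow> integrable (beta_prior d \<beta>) (\<lambda>p. \<Sum>x\<in>datasets n d. c1 j x * data_weight n d p x + c2 j x * (data_weight n d p x * p j))"
    by (intro Bochner_Integration.integrable_sum i3)
  show "integrable (beta_prior d \<beta>) (\<lambda>p. \<Sum>j<d. \<Sum>x\<in>datasets n d. c1 j x * data_weight n d p x + c2 j x * (data_weight n d p x * p j))"
    by (intro Bochner_Integration.integrable_sum i4) simp
  have "integral\<^sup>L (beta_prior d \<beta>) (\<lambda>p. \<Sum>j<d. \<Sum>x\<in>datasets n d. c1 j x * data_weight n d p x + c2 j x * (data_weight n d p x * p j))
     = (\<Sum>j<d. integral\<^sup>L (beta_prior d \<beta>) (\<lambda>p. \<Sum>x\<in>datasets n d. c1 j x * data_weight n d p x + c2 j x * (data_weight n d p x * p j)))"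
    by (rule Bochner_Integration.integral_sum) (rule i4, simp)
  also have "\<dots> = (\<Sum>j<d. \<Sum>x\<in>datasets n d. integral\<^sup>L (beta_prior d \<beta>) (\<lambda>p. c1 j x * data_weight n d p x + c2 j x * (data_weight n d p x * p j)))"
  proof (rule sum.cong[OF refl])
    fix j assume "j \<in> {..<d}"
    then have j: "j < d" by simp
    show "integral\<^sup>L (beta_prior d \<beta>) (\<lambda>p. \<Sum>x\<in>datasets n d. c1 j x * data_weight n d p x + c2 j x * (data_weight n d p x * p j))
      = (\<Sum>x\<in>datasets n d. integral\<^sup>L (beta_prior d \<beta>) (\<lambda>p. c1 j x * data_weight n d p x + c2 j x * (data_weight n d p x * p j)))"
      by (rule Bochner_Integration.integral_sum) (rule i3[OF j])
  qed
  also have "\<dots> = (\<Sum>j<d. \<Sum>x\<in>datasets n d. c1 j x * integral\<^sup>L (beta_prior d \<beta>) (\<lambda>p. data_weight n d p x)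
            + c2 j x * integral\<^sup>L (beta_prior d \<beta>) (\<lambda>p. data_weight n d p x * p j))"
  proof (intro sum.cong refl)
    fix j x assume "j \<in> {..<d}"
    then have j: "j < d" by simp
    show "integral\<^sup>L (beta_prior d \<beta>) (\<lambda>p. c1 j x * data_weight n d p x + c2 j x * (data_weight n d p x * p j))
      = c1 j x * integral\<^sup>L (beta_prior d \<beta>) (\<lambda>p. data_weight n d p x)
            + c2 j x * integral\<^sup>L (beta_prior d \<beta>) (\<lambda>p. data_weight n d p x * p j)"
      by (subst Bochner_Integration.integral_add)
         (auto intro: Bochner_Integration.integrable_mult_right i1 i2[OF j])
  qed
  finally show "integral\<^sup>L (beta_prior d \<beta>) (\<lambda>p. \<Sum>j<d. \<Sum>x\<in>datasets n d. c1 j x * data_weight n d p x + c2 j x * (data_weight n d p x * p j))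
      = (\<Sum>j<d. \<Sum>x\<in>datasets n d. c1 j x * integral\<^sup>L (beta_prior d \<beta>) (\<lambda>p. data_weight n d p x)
            + c2 j x * integral\<^sup>L (beta_prior d \<beta>) (\<lambda>p. data_weight n d p x * p j))" .
qed

lemma ind_int:
  assumes b: "0 < \<beta>" and j: "j < d"
  shows "integrable (beta_prior d \<beta>) (\<lambda>p. indicator {7/8::real..} (p j) :: real)"
    and "integral\<^sup>L (beta_prior d \<beta>) (\<lambda>p. indicator {7/8::real..} (p j) :: real) = measure (beta_measure \<beta> \<beta>) {7/8..}"
proof -
  interpret P: prob_space "beta_measure \<beta> \<beta>" by (rule prob_space_beta[OF b])
  define F where "F j' t = (if j' = j then indicator {7/8::real..} t else (1::real))" for j' t
  have eq: "(\<Prod>j'<d. F j' (p j')) = indicator {7/8::real..} (p j)" for p :: "nat \<Rightarrow> real"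
    unfolding F_def using j by (simp add: prod.delta)
  have Fi: "integrable (beta_measure \<beta> \<beta>) (F j')" for j'
  proof (cases "j' = j")
    case True
    have s: "{7/8::real..} \<in> sets (beta_measure \<beta> \<beta>)" by (simp add: beta_measure_def)
    show ?thesis unfolding F_def using True integrable_real_indicator[OF s] P.emeasure_finite[of "{7/8..}"]
      by (simp add: less_top[symmetric])
  next
    case False
    then show ?thesis unfolding F_def by simp
  qed
  show "integrable (beta_prior d \<beta>) (\<lambda>p. indicator {7/8::real..} (p j) :: real)"
    using prod_int(1)[OF b, of d F] Fi by (simp add: eq)
  have "integral\<^sup>L (beta_prior d \<beta>) (\<lambda>p. indicator {7/8::real..} (p j) :: real) = (\<Prod>j'<d. integral\<^sup>L (beta_measure \<beta> \<beta>) (F j'))"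
    using prod_int(2)[OF b, of d F] Fi by (simp add: eq)
  also have "\<dots> = (\<Prod>j'<d. if j' = j then measure (beta_measure \<beta> \<beta>) {7/8..} else 1)"
  proof (intro prod.cong refl)
    fix j' assume "j' \<in> {..<d}"
    have sp: "space (beta_measure \<beta> \<beta>) = UNIV" by (simp add: beta_measure_def)
    show "integral\<^sup>L (beta_measure \<beta> \<beta>) (F j') = (if j' = j then measure (beta_measure \<beta> \<beta>) {7/8..} else 1)"
      unfolding F_def by (cases "j' = j") (simp_all add: sp P.prob_space[unfolded sp])
  qed
  also have "\<dots> = measure (beta_measure \<beta> \<beta>) {7/8..}" using j by (simp add: prod.delta)
  finally show "integral\<^sup>L (beta_prior d \<beta>) (\<lambda>p. indicator {7/8::real..} (p j) :: real) = measure (beta_measure \<beta> \<beta>) {7/8..}" .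
qed

lemma final_arith:
  fixes T L \<beta> e :: real and n k :: nat
  assumes k2: "2 \<le> k" and L: "0 \<le> L" and b: "\<beta> = 1 + 1/2 * L" and T: "15/16 * real k \<le> T"
    and main: "\<beta> * (3/8 * T - 11 * real k / 128) \<le> real n * e * sqrt T / 2 + 1/8"
    and e: "0 < e" "e \<le> 3"
  shows "1/16 * sqrt (real k) * L \<le> real n"
proof (rule ccontr)
  assume "\<not> ?thesis"
  then have nlt: "real n < 1/16 * sqrt (real k) * L" by simp
  define s where "s = sqrt T"
  define r where "r = sqrt (real k)"
  have Tpos: "0 < T" using T k2 by simp
  have s2: "s^2 = T" using Tpos by (simp add: s_def)
  have r2: "r^2 = real k" by (simp add: r_def)
  have r0: "0 \<le> r" by (simp add: r_def)
  have s0: "0 < s" using Tpos by (simp add: s_def)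
  have "((15/16) * r)^2 \<le> s^2"
  proof -
    have "((15/16) * r)^2 = (225/256) * real k" unfolding power_mult_distrib r2 by (simp add: power2_eq_square)
    also have "\<dots> \<le> 15/16 * real k" by simp
    finally show ?thesis using T s2 by simp
  qed
  then have sr: "(15/16) * r \<le> s" by (rule power2_le_imp_le) (use s0 in simp)
  have ssq: "15/8 \<le> s^2" using T k2 s2 by simp
  have keq: "11 * real k / 128 \<le> 11 * T / 120" using T by simp
  have lhs: "\<beta> * (17 * T / 60) \<le> \<beta> * (3/8 * T - 11 * real k / 128)"
    using keq b L by (intro mult_left_mono) auto
  have rhs: "real n * e * s / 2 \<le> 3 / 32 * r * L * s"
  proof -
    have "real n * e \<le> (1/16 * r * L) * 3"
      using nlt e by (intro mult_mono) (auto simp: r_def)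
    then have "real n * e * s \<le> (1/16 * r * L) * 3 * s" using s0 by (intro mult_right_mono) auto
    then show ?thesis by (simp add: mult_ac)
  qed
  have f1: "\<beta> * (17 * T / 60) = 17 * s^2 / 60 + 17 / 120 * L * s * s"
    using b s2 by (simp add: power2_eq_square algebra_simps)
  have f2: "17 / 120 * L * s * ((15/16) * r) \<le> 17 / 120 * L * s * s"
    using sr s0 L by (intro mult_left_mono) auto
  have f3: "1/8 < 17 * s^2 / 60" using ssq by simp
  have f4: "3 / 32 * r * L * s \<le> 17 / 120 * L * s * ((15/16) * r)"
  proof -
    have e1: "17 / 120 * L * s * ((15/16) * r) = (17 * 15 / 1920) * (r * L * s)" by (simp add: algebra_simps)
    have e2: "3 / 32 * r * L * s = (3 / 32) * (r * L * s)" by simp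
    have "0 \<le> r * L * s" using r0 L s0 by simp
    then have "(3 / 32) * (r * L * s) \<le> (17 * 15 / 1920) * (r * L * s)" by (intro mult_right_mono) auto
    then show ?thesis unfolding e1 e2 .
  qed
  have "real n * e * s / 2 + 1/8 < \<beta> * (17 * T / 60)"
    using f1 f2 f3 f4 rhs by linarith
  then show False using lhs main unfolding s_def by linarith
qed

definition mmf :: "(bool list list \<Rightarrow> bool list pmf) \<Rightarrow> nat \<Rightarrow> nat \<Rightarrow> bool list list \<Rightarrow> real" where
  "mmf M d j x = (\<Sum>y\<in>rows d. pmf (M x) y * of_bool (y!j))"

lemma sum_cnt: "(\<Sum>i<n. of_bool (x!i!j) - p) = real (cnt n x j) - real n * (p::real)"
proof -
  have "{..<n} \<inter> {i. x!i!j} = {i\<in>{..<n}. x!i!j}" by auto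
  then show ?thesis by (simp add: sum_subtractf cnt_def)
qed

lemma inner_eq:
  "(\<Sum>i<n. \<Sum>y\<in>rows d. pmf (M x) y * Zs p d (x!i) y) = (\<Sum>j<d. mmf M d j x * (real (cnt n x j) - real n * p j))"
proof -
  have "(\<Sum>i<n. \<Sum>y\<in>rows d. pmf (M x) y * Zs p d (x!i) y)
      = (\<Sum>i<n. \<Sum>y\<in>rows d. \<Sum>j<d. pmf (M x) y * of_bool (y!j) * (of_bool (x!i!j) - p j))"
    by (simp only: Zs_def sum_distrib_left mult.assoc)
  also have "\<dots> = (\<Sum>y\<in>rows d. \<Sum>i<n. \<Sum>j<d. pmf (M x) y * of_bool (y!j) * (of_bool (x!i!j) - p j))"
    by (rule sum.swap)
  also have "\<dots> = (\<Sum>y\<in>rows d. \<Sum>j<d. \<Sum>i<n. pmf (M x) y * of_bool (y!j) * (of_bool (x!i!j) - p j))"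
    by (intro sum.cong refl sum.swap)
  also have "\<dots> = (\<Sum>j<d. \<Sum>y\<in>rows d. \<Sum>i<n. pmf (M x) y * of_bool (y!j) * (of_bool (x!i!j) - p j))"
    by (rule sum.swap)
  also have "\<dots> = (\<Sum>j<d. \<Sum>y\<in>rows d. pmf (M x) y * of_bool (y!j) * (real (cnt n x j) - real n * p j))"
    by (intro sum.cong refl) (simp only: sum_distrib_left[symmetric] sum_cnt)
  also have "\<dots> = (\<Sum>j<d. mmf M d j x * (real (cnt n x j) - real n * p j))"
    by (intro sum.cong refl) (simp only: mmf_def sum_distrib_right)
  finally show ?thesis .
qed

lemma A_eq:
  "(\<Sum>i<n. \<Sum>x\<in>datasets n d. data_weight n d p x * (\<Sum>y\<in>rows d. pmf (M x) y * Zs p d (x!i) y))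
   = (\<Sum>j<d. \<Sum>x\<in>datasets n d. (mmf M d j x * real (cnt n x j)) * data_weight n d p x + (- mmf M d j x * real n) * (data_weight n d p x * p j))"
proof -
  have "(\<Sum>i<n. \<Sum>x\<in>datasets n d. data_weight n d p x * (\<Sum>y\<in>rows d. pmf (M x) y * Zs p d (x!i) y))
      = (\<Sum>x\<in>datasets n d. data_weight n d p x * (\<Sum>i<n. \<Sum>y\<in>rows d. pmf (M x) y * Zs p d (x!i) y))"
    by (subst sum.swap) (simp only: sum_distrib_left)
  also have "\<dots> = (\<Sum>x\<in>datasets n d. data_weight n d p x * (\<Sum>j<d. mmf M d j x * (real (cnt n x j) - real n * p j)))"
    by (simp only: inner_eq)
  also have "\<dots> = (\<Sum>x\<in>datasets n d. \<Sum>j<d. (mmf M d j x * real (cnt n x j)) * data_weight n d p x + (- mmf M d j x * real n) * (data_weight n d p x * p j))"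
    by (intro sum.cong refl) (simp add: sum_distrib_left algebra_simps)
  also have "\<dots> = (\<Sum>j<d. \<Sum>x\<in>datasets n d. (mmf M d j x * real (cnt n x j)) * data_weight n d p x + (- mmf M d j x * real n) * (data_weight n d p x * p j))"
    by (rule sum.swap)
  finally show ?thesis .
qed

lemma S_eq:
  "(\<Sum>x\<in>datasets n d. data_weight n d p x * (\<Sum>y\<in>rows d. pmf (M x) y * Ns d y))
   = (\<Sum>j<d. \<Sum>x\<in>datasets n d. mmf M d j x * data_weight n d p x + 0 * (data_weight n d p x * p j))"
proof -
  have "\<And>x. (\<Sum>y\<in>rows d. pmf (M x) y * Ns d y) = (\<Sum>j<d. mmf M d j x)"
    unfolding Ns_def mmf_def by (simp only: sum_distrib_left) (rule sum.swap)
  then have "(\<Sum>x\<in>datasets n d. data_weight n d p x * (\<Sum>y\<in>rows d. pmf (M x) y * Ns d y))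
      = (\<Sum>x\<in>datasets n d. \<Sum>j<d. mmf M d j x * data_weight n d p x)"
    by (simp add: sum_distrib_left mult.commute)
  also have "\<dots> = (\<Sum>j<d. \<Sum>x\<in>datasets n d. mmf M d j x * data_weight n d p x + 0 * (data_weight n d p x * p j))"
    by (simp add: sum.swap[of _ "datasets n d"])
  finally show ?thesis .
qed

lemma powr_tail:
  fixes k d :: real
  assumes k: "0 < k" and kd: "16 * k < d"
  shows "16 * k / d \<le> (15/64) powr (1/2 * ln (d / (16 * k)))"
proof -
  define L where "L = ln (d / (16 * k))"
  have dpos: "0 < d" using k kd by simp
  have L0: "0 \<le> L" unfolding L_def using k kd by simp
  have e2: "64/15 \<le> exp (2::real)"
    using exp_lower_Taylor_quadratic[of 2] by simp
  have ln1: "-2 \<le> ln (15/64::real)"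
  proof -
    have "ln (64/15::real) \<le> ln (exp 2)" using e2 by (subst ln_le_cancel_iff) auto
    then have "ln (64/15::real) \<le> 2" by simp
    moreover have "ln (15/64::real) = - ln (64/15)" by (simp add: ln_div)
    ultimately show ?thesis by simp
  qed
  have "exp (- L) = 16 * k / d"
    unfolding L_def using k dpos by (simp add: exp_minus field_simps)
  moreover have "exp (- L) \<le> exp (1/2 * L * ln (15/64))"
  proof -
    have "L * (-2) \<le> L * ln (15/64)" by (rule mult_left_mono[OF ln1 L0])
    moreover have "1/2 * L * ln (15/64::real) = 1/2 * (L * ln (15/64))" by simp
    ultimately have "- L \<le> 1/2 * L * ln (15/64::real)" by linarith
    then show ?thesis by simp
  qed
  moreover have "exp (1/2 * L * ln (15/64)) = (15/64) powr (1/2 * L)"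
    by (simp add: powr_def mult_ac)
  ultimately show ?thesis unfolding L_def by simp
qed

lemma affine_int:
  fixes f :: "'a \<Rightarrow> real"
  assumes "prob_space P" "integrable P f"
  shows "integrable P (\<lambda>p. a * f p + b)" "integral\<^sup>L P (\<lambda>p. a * f p + b) = a * integral\<^sup>L P f + b"
proof -
  interpret prob_space P by fact
  show "integrable P (\<lambda>p. a * f p + b)"
    using assms(2) by (intro Bochner_Integration.integrable_add Bochner_Integration.integrable_mult_right) auto
  show "integral\<^sup>L P (\<lambda>p. a * f p + b) = a * integral\<^sup>L P f + b"
    using assms(2) prob_space by (subst Bochner_Integration.integral_add) auto
qed

lemma cond_eq:
  assumes "\<forall>x\<in>datasets n d. set_pmf (M x) \<subseteq> rows d"
  shows "cond_prob_one n d M p j = (\<Sum>x\<in>datasets n d. data_weight n d p x * mmf M d j x)"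
  unfolding cond_prob_one_def mmf_def
proof (intro sum.cong refl)
  fix x assume x: "x \<in> datasets n d"
  have "measure_pmf.prob (M x) {y. y!j} = (\<Sum>y\<in>rows d. pmf (M x) y * of_bool (y \<in> {y. y!j}))"
    by (rule prob_sum) (use assms x in auto)
  then show "data_weight n d p x * measure_pmf.prob (M x) {y. y ! j} =
         data_weight n d p x * (\<Sum>y\<in>rows d. pmf (M x) y * of_bool (y ! j))" by simp
qed

theorem corollary4p3:
  fixes n d k :: nat and M :: "bool list list \<Rightarrow> bool list pmf"
  assumes "16 * k \<ge> 32" and "d \<ge> 16 * k"
    and "\<forall>x\<in>datasets n d. set_pmf (M x) \<subseteq> {y. length y = d}"
    and "diff_private n d 1 (1 / (8 * real n * real d)) M"
    and "AE p in beta_prior d (1 + 1/2 * ln (real d / (16 * real k))).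
           \<forall>j<d. (p j \<le> 7/8 - 3/16 \<longrightarrow> cond_prob_one n d M p j \<le> real k / (16 * real d))
               \<and> (p j \<ge> 7/8 \<longrightarrow> cond_prob_one n d M p j \<ge> 1 - 1/16)"
  shows "real n \<ge> 1/16 * sqrt (real k) * ln (real d / (16 * real k))"
proof -
  have k2: "2 \<le> k" using assms(1) by simp
  have kpos: "0 < real k" using k2 by simp
  have dk: "16 * real k \<le> real d" using assms(2) by (metis of_nat_le_iff of_nat_mult of_nat_numeral)
  have dpos: "0 < real d" using dk kpos by simp
  show ?thesis
  proof (cases "d = 16 * k")
    case True
    then have "real d / (16 * real k) = 1" using kpos by simp
    then show ?thesis by simp
  next
    case False
    then have dk': "16 * real k < real d" using dk by (metis less_eq_real_def of_nat_eq_iff of_nat_mult of_nat_numeral)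
    define L where "L = ln (real d / (16 * real k))"
    define \<beta> where "\<beta> = 1 + 1/2 * L"
    have L0: "0 < L" unfolding L_def using dk' kpos by simp
    have b1: "1 \<le> \<beta>" and b0: "0 < \<beta>" using L0 by (auto simp: \<beta>_def)
    define P where "P = beta_prior d \<beta>"
    interpret prob_space P unfolding P_def by (rule prob_space_prior[OF b0])
    have h5: "AE p in P. \<forall>j<d. (p j \<le> 7/8 - 3/16 \<longrightarrow> cond_prob_one n d M p j \<le> real k / (16 * real d))
               \<and> (p j \<ge> 7/8 \<longrightarrow> cond_prob_one n d M p j \<ge> 1 - 1/16)"
      using assms(5) unfolding P_def \<beta>_def L_def .
    have supp: "\<forall>x\<in>datasets n d. set_pmf (M x) \<subseteq> rows d" using assms(3) by (simp add: rows_def)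
    define \<delta> where "\<delta> = 1 / (8 * real n * real d)"
    have dl0: "0 \<le> \<delta>" by (simp add: \<delta>_def)
    have dp: "\<forall>x\<in>datasets n d. \<forall>x'\<in>datasets n d. neighbors x x' \<longrightarrow>
              (\<forall>R. measure_pmf.prob (M x) R \<le> exp 1 * measure_pmf.prob (M x') R + \<delta>)"
      using assms(4) unfolding diff_private_def \<delta>_def by simp
    have nd: "real n * (real d * \<delta>) \<le> 1/8"
    proof (cases "n = 0")
      case True then show ?thesis by simp
    next
      case False then show ?thesis using dpos by (simp add: \<delta>_def)
    qed
    define mm where "mm = mmf M d"
    let ?D = "datasets n d"
    let ?w = "\<lambda>p x. data_weight n d p x"
    define Af where "Af p = (\<Sum>j<d. \<Sum>x\<in>?D. (mm j x * real (cnt n x j)) * ?w p x + (- mm j x * real n) * (?w p x * p j))" for p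
    define Gf where "Gf p = (\<Sum>j<d. \<Sum>x\<in>?D. (- mm j x) * ?w p x + (2 * mm j x) * (?w p x * p j))" for p
    define Sf where "Sf p = (\<Sum>j<d. \<Sum>x\<in>?D. mm j x * ?w p x + 0 * (?w p x * p j))" for p
    define If where "If p = (\<Sum>j<d. indicator {7/8::real..} (p j) :: real)" for p
    have iA: "integrable P Af" unfolding Af_def P_def by (rule lin_int(1)[OF b0])
    have iG: "integrable P Gf" unfolding Gf_def P_def by (rule lin_int(1)[OF b0])
    have iS: "integrable P Sf" unfolding Sf_def P_def by (rule lin_int(1)[OF b0])
    have iI: "integrable P If" unfolding If_def P_def
      by (intro Bochner_Integration.integrable_sum ind_int(1)[OF b0]) auto
    have EA: "integral\<^sup>L P Af = \<beta> * integral\<^sup>L P Gf"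
    proof -
      have "integral\<^sup>L P Af = (\<Sum>j<d. \<Sum>x\<in>?D. (mm j x * real (cnt n x j)) * integral\<^sup>L P (\<lambda>p. ?w p x)
            + (- mm j x * real n) * integral\<^sup>L P (\<lambda>p. ?w p x * p j))"
        unfolding Af_def P_def by (rule lin_int(2)[OF b0])
      also have "\<dots> = (\<Sum>j<d. \<Sum>x\<in>?D. \<beta> * ((- mm j x) * integral\<^sup>L P (\<lambda>p. ?w p x)
            + (2 * mm j x) * integral\<^sup>L P (\<lambda>p. ?w p x * p j)))"
      proof (intro sum.cong refl)
        fix j x assume "j \<in> {..<d}"
        then have j: "j < d" by simp
        have fp: "real (cnt n x j) * integral\<^sup>L P (\<lambda>p. ?w p x) - real n * integral\<^sup>L P (\<lambda>p. ?w p x * p j)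
            = \<beta> * (2 * integral\<^sup>L P (\<lambda>p. ?w p x * p j) - integral\<^sup>L P (\<lambda>p. ?w p x))"
          unfolding P_def by (rule fp_identity[OF b0 j])
        show "(mm j x * real (cnt n x j)) * integral\<^sup>L P (\<lambda>p. ?w p x) + (- mm j x * real n) * integral\<^sup>L P (\<lambda>p. ?w p x * p j)
            = \<beta> * ((- mm j x) * integral\<^sup>L P (\<lambda>p. ?w p x) + (2 * mm j x) * integral\<^sup>L P (\<lambda>p. ?w p x * p j))"
          using arg_cong[OF fp, of "\<lambda>z. mm j x * z"] by (simp add: algebra_simps)
      qed
      also have "\<dots> = \<beta> * (\<Sum>j<d. \<Sum>x\<in>?D. (- mm j x) * integral\<^sup>L P (\<lambda>p. ?w p x)
            + (2 * mm j x) * integral\<^sup>L P (\<lambda>p. ?w p x * p j))"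
        by (simp only: sum_distrib_left)
      also have "(\<Sum>j<d. \<Sum>x\<in>?D. (- mm j x) * integral\<^sup>L P (\<lambda>p. ?w p x)
            + (2 * mm j x) * integral\<^sup>L P (\<lambda>p. ?w p x * p j)) = integral\<^sup>L P Gf"
        unfolding Gf_def P_def by (rule lin_int(2)[OF b0, symmetric])
      finally show ?thesis .
    qed
    have EI: "integral\<^sup>L P If = real d * measure (beta_measure \<beta> \<beta>) {7/8..}"
    proof -
      have "integral\<^sup>L P If = (\<Sum>j<d. integral\<^sup>L P (\<lambda>p. indicator {7/8::real..} (p j) :: real))"
        unfolding If_def P_def by (rule Bochner_Integration.integral_sum) (rule ind_int(1)[OF b0], simp)
      also have "\<dots> = (\<Sum>j<d. measure (beta_measure \<beta> \<beta>) {7/8..})"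
        unfolding P_def by (intro sum.cong refl ind_int(2)[OF b0]) simp
      finally show ?thesis by simp
    qed
    have Ik: "real k \<le> integral\<^sup>L P If"
    proof -
      have "16 * real k / real d \<le> (15/64) powr (\<beta> - 1)"
        using powr_tail[OF kpos dk'] by (simp add: \<beta>_def L_def)
      also have "\<dots> \<le> 16 * measure (beta_measure \<beta> \<beta>) {7/8..}" using tail_lower[OF b1] by simp
      finally have "real k \<le> real d * measure (beta_measure \<beta> \<beta>) {7/8..}"
        using dpos by (simp add: field_simps)
      then show ?thesis using EI by simp
    qed
    have good: "AE p in P. (\<forall>j<d. 0 < p j \<and> p j < 1) \<and> (\<forall>j<d. (p j \<le> 7/8 - 3/16 \<longrightarrow> cond_prob_one n d M p j \<le> real k / (16 * real d))
               \<and> (p j \<ge> 7/8 \<longrightarrow> cond_prob_one n d M p j \<ge> 1 - 1/16))"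
      using h5 AE_prior_01[OF b0, of d] unfolding P_def by eventually_elim auto
    have pw: "Sf p = (\<Sum>j<d. cond_prob_one n d M p j)" "Gf p = (\<Sum>j<d. cond_prob_one n d M p j * (2 * p j - 1))"
         "\<And>j. cond_prob_one n d M p j = (\<Sum>x\<in>?D. ?w p x * mm j x)" for p
    proof -
      show c: "\<And>j. cond_prob_one n d M p j = (\<Sum>x\<in>?D. ?w p x * mm j x)"
        unfolding mm_def by (rule cond_eq[OF supp])
      show "Sf p = (\<Sum>j<d. cond_prob_one n d M p j)"
        unfolding Sf_def c by (simp add: mult.commute)
      show "Gf p = (\<Sum>j<d. cond_prob_one n d M p j * (2 * p j - 1))"
        unfolding Gf_def c
      proof (intro sum.cong refl)
        fix j
        have "(\<Sum>x\<in>?D. (- mm j x) * ?w p x + (2 * mm j x) * (?w p x * p j)) = (\<Sum>x\<in>?D. (?w p x * mm j x) * (2 * p j - 1))"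
          by (intro sum.cong refl) (simp add: algebra_simps)
        also have "\<dots> = (\<Sum>x\<in>?D. ?w p x * mm j x) * (2 * p j - 1)"
          by (rule sum_distrib_right[symmetric])
        finally show "(\<Sum>x\<in>?D. (- mm j x) * ?w p x + (2 * mm j x) * (?w p x * p j)) = (\<Sum>x\<in>?D. ?w p x * mm j x) * (2 * p j - 1)" .
      qed
    qed
    have gnn: "0 \<le> cond_prob_one n d M p j" if "\<forall>j<d. 0 < p j \<and> p j < 1" for p j
      unfolding pw(3) mm_def mmf_def using that
      by (intro sum_nonneg mult_nonneg_nonneg dw_nonneg) auto
    have LowG: "AE p in P. 3/8 * Sf p + (- 11 * real k / 128) \<le> Gf p"
      using good
    proof eventually_elim
      case (elim p)
      then have p01: "\<forall>j<d. 0 < p j \<and> p j < 1" and hc: "\<forall>j<d. (p j \<le> 7/8 - 3/16 \<longrightarrow> cond_prob_one n d M p j \<le> real k / (16 * real d))" by auto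
      have "\<forall>j\<in>{..<d}. 3/8 * cond_prob_one n d M p j - (11/8) * (real k / (16 * real d)) \<le> cond_prob_one n d M p j * (2 * p j - 1)"
      proof
        fix j assume "j \<in> {..<d}"
        then have j: "j < d" by simp
        have g0: "0 \<le> cond_prob_one n d M p j" using gnn[OF p01] .
        show "3/8 * cond_prob_one n d M p j - (11/8) * (real k / (16 * real d)) \<le> cond_prob_one n d M p j * (2 * p j - 1)"
        proof (cases "p j \<le> 7/8 - 3/16")
          case True
          then have g1: "cond_prob_one n d M p j \<le> real k / (16 * real d)" using hc j by auto
          have "- cond_prob_one n d M p j \<le> cond_prob_one n d M p j * (2 * p j - 1)"
          proof -
            have "-1 \<le> 2 * p j - 1" using p01 j by auto
            from mult_left_mono[OF this g0] show ?thesis by simp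
          qed
          then show ?thesis using g1 g0 by linarith
        next
          case False
          then have "3/8 \<le> 2 * p j - 1" by simp
          then have "cond_prob_one n d M p j * (3/8) \<le> cond_prob_one n d M p j * (2 * p j - 1)"
            using g0 by (rule mult_left_mono)
          moreover have "0 \<le> real k / (16 * real d)" by simp
          ultimately show ?thesis by linarith
        qed
      qed
      then have "(\<Sum>j<d. 3/8 * cond_prob_one n d M p j - (11/8) * (real k / (16 * real d))) \<le> Gf p"
        unfolding pw(2) by (intro sum_mono) auto
      moreover have "(\<Sum>j<d. 3/8 * cond_prob_one n d M p j - (11/8) * (real k / (16 * real d)))
          = 3/8 * Sf p + (- 11 * real k / 128)"
      proof -
        have "(\<Sum>j<d. 3/8 * cond_prob_one n d M p j - (11/8) * (real k / (16 * real d)))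
            = 3/8 * (\<Sum>j<d. cond_prob_one n d M p j) - real d * ((11/8) * (real k / (16 * real d)))"
          by (simp only: sum_subtractf sum_distrib_left[symmetric] sum_constant) simp
        moreover have "real d * ((11/8) * (real k / (16 * real d))) = 11 * real k / 128"
          using dpos by (simp add: field_simps)
        ultimately show ?thesis unfolding pw(1) by simp
      qed
      ultimately show ?case by simp
    qed
    have LowS: "AE p in P. 15/16 * If p + 0 \<le> Sf p"
      using good
    proof eventually_elim
      case (elim p)
      then have p01: "\<forall>j<d. 0 < p j \<and> p j < 1" and hc: "\<forall>j<d. (p j \<ge> 7/8 \<longrightarrow> cond_prob_one n d M p j \<ge> 1 - 1/16)" by auto
      have "(\<Sum>j<d. 15/16 * indicator {7/8::real..} (p j)) \<le> (\<Sum>j<d. cond_prob_one n d M p j)"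
      proof (intro sum_mono)
        fix j assume "j \<in> {..<d}"
        then have j: "j < d" by simp
        show "15/16 * indicator {7/8::real..} (p j) \<le> cond_prob_one n d M p j"
          using hc j gnn[OF p01, of j] by (auto simp: indicator_def)
      qed
      then show ?case unfolding If_def pw(1) by (simp add: sum_distrib_left)
    qed
    define T where "T = integral\<^sup>L P Sf"
    have Tk: "15/16 * real k \<le> T"
    proof -
      have "integral\<^sup>L P (\<lambda>p. 15/16 * If p + 0) \<le> T"
        unfolding T_def by (rule integral_mono_AE[OF affine_int(1)[OF prob_space_axioms iI] iS LowS])
      then show ?thesis using affine_int(2)[OF prob_space_axioms iI, of "15/16" 0] Ik by simp
    qed
    have Tpos: "0 < T" using Tk kpos by simp
    have EG: "3/8 * T + (- 11 * real k / 128) \<le> integral\<^sup>L P Gf"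
      using integral_mono_AE[OF affine_int(1)[OF prob_space_axioms iS] iG LowG]
        affine_int(2)[OF prob_space_axioms iS, of "3/8" "- 11 * real k / 128"] unfolding T_def by simp
    define c where "c = sqrt T / 2"
    have c0: "0 < c" using Tpos by (simp add: c_def)
    have UpA: "AE p in P. Af p \<le> (real n * exp 1 / (8 * c)) * Sf p + real n * (exp 1 * c / 2 + real d * \<delta>)"
      using good
    proof eventually_elim
      case (elim p)
      then have p01: "\<forall>j<d. 0 \<le> p j \<and> p j \<le> 1" by auto
      have "Af p = (\<Sum>i<n. \<Sum>x\<in>?D. ?w p x * (\<Sum>y\<in>rows d. pmf (M x) y * Zs p d (x!i) y))"
        unfolding Af_def mm_def by (rule A_eq[symmetric])
      also have "\<dots> \<le> (\<Sum>i<n. exp 1 * ((\<Sum>x\<in>?D. ?w p x * (\<Sum>y\<in>rows d. pmf (M x) y * Ns d y)) / 4 / c + c) / 2 + real d * \<delta>)"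
        by (intro sum_mono upper_i[OF p01 _ c0 dl0 supp dp]) simp
      also have "(\<Sum>x\<in>?D. ?w p x * (\<Sum>y\<in>rows d. pmf (M x) y * Ns d y)) = Sf p"
        unfolding Sf_def mm_def by (rule S_eq)
      finally show ?case using c0 by (simp add: field_simps)
    qed
    have EA': "integral\<^sup>L P Af \<le> (real n * exp 1 / (8 * c)) * T + real n * (exp 1 * c / 2 + real d * \<delta>)"
      using integral_mono_AE[OF iA affine_int(1)[OF prob_space_axioms iS] UpA]
        affine_int(2)[OF prob_space_axioms iS, of "real n * exp 1 / (8 * c)" "real n * (exp 1 * c / 2 + real d * \<delta>)"]
      unfolding T_def by linarith
    have sT: "sqrt T * sqrt T = T" using Tpos by simp
    have "(real n * exp 1 / (8 * c)) * T + real n * (exp 1 * c / 2 + real d * \<delta>)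
        = real n * exp 1 * sqrt T / 2 + real n * (real d * \<delta>)"
      using Tpos unfolding c_def by (simp add: field_simps sT)
    then have main: "\<beta> * (3/8 * T - 11 * real k / 128) \<le> real n * exp 1 * sqrt T / 2 + 1/8"
      using EA EA' EG nd b0 mult_left_mono[OF EG, of \<beta>] by (simp add: algebra_simps)
    show ?thesis
      using final_arith[OF k2 _ \<beta>_def Tk main _ exp_le] L0 unfolding L_def by simp
  qed
qed

end
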